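(* Let $r>1$ and integers $N\ge1$, $K>2$. Define $$\gamma_1^*(r,K,N)=N\sum_{i=N}^\infty\frac1i\left(1-\frac1r\right)^i\left(1-\frac1{K-1}\right)^i,\qquad \gamma_2^*(r,K,N)=N\sum_{i=N}^\infty\frac1i\left(1-\frac1r\right)^i.$$ Then $$\frac{\gamma_1^*(r,K,N)}{\frac{r^N-(r-1)^N}{r^{N-1}}+\gamma_1^*(r,K,N)}\le\eta(r,K,N)\le\frac{\gamma_2^*(r,K,N)}{\frac{r^N-(r-1)^N}{r^{N-1}}+\gamma_2^*(r,K,N)}.$$
   Context: Single item auction with $N$ buyers whose values are i.i.d., each taking values $0<x^1<\dots<x^K$ with probabilities $p^i>0$, $\sum_ip^i=1$. Let $z^i=(\sum_{j=1}^ip^j)^N-(\sum_{j=1}^{i-1}p^j)^N$ and reserve index $t(x,p)=\max\{i: i\in\arg\max_{1\le k\le K}x^k\sum_{j=k}^Kp^j\}$. The efficiency loss ratio of the welfare-maximizing revenue-optimal auction is $\mathrm{ELR}_N(x,p)=\sum_{i=1}^{t(x,p)-1}z^ix^i/\sum_{i=1}^Kz^ix^i$. $\eta(r,K,N)$ is the supremum of $\mathrm{ELR}_N(x,p)$ over all such $p$ and all $x$ with $0<x^1<\dots<x^K\le rx^1$. *)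

theory Defs
  imports "HOL-Analysis.Analysis"
begin

text \<open>Values and probabilities are indexed by 1..K (functions nat => real).\<close>

definition zprob :: "nat \<Rightarrow> (nat \<Rightarrow> real) \<Rightarrow> nat \<Rightarrow> real" where
  "zprob N p i = (\<Sum>j=1..i. p j) ^ N - (\<Sum>j=1..<i. p j) ^ N"

definition reserve_index :: "nat \<Rightarrow> (nat \<Rightarrow> real) \<Rightarrow> (nat \<Rightarrow> real) \<Rightarrow> nat" where
  "reserve_index K x p = Max {i \<in> {1..K}. \<forall>k\<in>{1..K}.
      x k * (\<Sum>j=k..K. p j) \<le> x i * (\<Sum>j=i..K. p j)}"

definition ELR :: "nat \<Rightarrow> nat \<Rightarrow> (nat \<Rightarrow> real) \<Rightarrow> (nat \<Rightarrow> real) \<Rightarrow> real" where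
  "ELR N K x p = (\<Sum>i=1..<reserve_index K x p. zprob N p i * x i)
                 / (\<Sum>i=1..K. zprob N p i * x i)"

definition valid_dist :: "nat \<Rightarrow> (nat \<Rightarrow> real) \<Rightarrow> bool" where
  "valid_dist K p \<longleftrightarrow> (\<forall>i\<in>{1..K}. p i > 0) \<and> (\<Sum>i=1..K. p i) = 1"

definition valid_values :: "real \<Rightarrow> nat \<Rightarrow> (nat \<Rightarrow> real) \<Rightarrow> bool" where
  "valid_values r K x \<longleftrightarrow> 0 < x 1 \<and> (\<forall>i\<in>{1..<K}. x i < x (Suc i)) \<and> x K \<le> r * x 1"

definition eta :: "real \<Rightarrow> nat \<Rightarrow> nat \<Rightarrow> real" where
  "eta r K N = Sup {ELR N K x p | x p. valid_dist K p \<and> valid_values r K x}"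

definition gamma1 :: "real \<Rightarrow> nat \<Rightarrow> nat \<Rightarrow> real" where
  "gamma1 r K N = real N * (\<Sum>i. (1 / real (i + N)) * (1 - 1 / r) ^ (i + N)
                                   * (1 - 1 / (real K - 1)) ^ (i + N))"

definition gamma2 :: "real \<Rightarrow> nat \<Rightarrow> nat \<Rightarrow> real" where
  "gamma2 r K N = real N * (\<Sum>i. (1 / real (i + N)) * (1 - 1 / r) ^ (i + N))"

end

theory Submission
  imports Defs
begin

definition psi :: "nat \<Rightarrow> real \<Rightarrow> real" where
  "psi N u = - ln (1 - u) - (\<Sum>n<N. u ^ n / real n)"

lemma psi_sums:
  assumes "\<bar>u\<bar> < 1"
  shows "(\<lambda>i. 1 / real (i + N) * u ^ (i + N)) sums psi N u"
proof -
  from ln_series'[of "-u"] assms have "(\<lambda>n. - (u ^ n) / of_nat n) sums ln (1 - u)" by simp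
  hence "(\<lambda>n. u ^ n / real n) sums (- ln (1 - u))"
    using sums_minus by fastforce
  hence "(\<lambda>i. u ^ (i + N) / real (i + N)) sums (- ln (1 - u) - (\<Sum>n<N. u ^ n / real n))"
    by (rule sums_split_initial_segment)
  thus ?thesis by (simp add: psi_def)
qed

lemma psi_zero: "psi N 0 = 0"
proof -
  have "(\<Sum>n<N. (0::real) ^ n / real n) = 0"
    apply (rule sum.neutral) apply (rule ballI) apply (case_tac x) by auto
  thus ?thesis unfolding psi_def by simp
qed

lemma deriv_sum_id:
  fixes u :: real
  assumes "u < 1" "N \<ge> 1"
  shows "1 / (1 - u) - (\<Sum>n<N. real n * u ^ (n - 1) / real n) = u ^ (N - 1) / (1 - u)"
  using assms(2)
proof (induction N rule: nat_induct_at_least)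
  case base
  then show ?case by simp
next
  case (Suc n)
  have "1 / (1 - u) - (\<Sum>m<Suc n. real m * u ^ (m - 1) / real m)
      = u ^ (n - 1) / (1 - u) - u ^ (n - 1)" using Suc by simp
  also have "\<dots> = u ^ n / (1 - u)" using assms(1) Suc.hyps
    by (cases n) (auto simp: field_simps)
  finally show ?case by simp
qed

lemma psi_deriv:
  assumes "u < 1" "N \<ge> 1"
  shows "(psi N has_real_derivative u ^ (N - 1) / (1 - u)) (at u)"
proof -
  have "(psi N has_real_derivative (1 / (1 - u) - (\<Sum>n<N. real n * u ^ (n - 1) / real n))) (at u)"
  proof -
    have d1: "((\<lambda>u. - ln (1 - u)) has_real_derivative 1 / (1 - u)) (at u)"
      using assms by (auto intro!: derivative_eq_intros simp: field_simps)
    have d2: "((\<lambda>u. \<Sum>n<N. u ^ n / real n) has_real_derivative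
         (\<Sum>n<N. real n * u ^ (n - 1) / real n)) (at u)"
      using DERIV_pow[of _ u UNIV] by (intro DERIV_sum DERIV_cdivide) simp
    show ?thesis unfolding psi_def[abs_def] by (rule DERIV_diff[OF d1 d2])
  qed
  thus ?thesis using deriv_sum_id[OF assms] by simp
qed

lemma psi_lower:
  assumes N: "N \<ge> 1" and v: "0 \<le> v" "v \<le> w" "w < 1"
  shows "(w ^ N - v ^ N) / (1 - v) \<le> real N * (psi N w - psi N v)"
proof -
  let ?f = "\<lambda>u. real N * psi N u - u ^ N / (1 - v)"
  have "?f v \<le> ?f w"
  proof (rule DERIV_nonneg_imp_nondecreasing[OF v(2)])
    fix u assume u: "v \<le> u" "u \<le> w"
    hence u1: "u < 1" using v by simp
    have "(?f has_real_derivative real N * (u ^ (N - 1) / (1 - u)) - real N * u ^ (N - 1) / (1 - v)) (at u)"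
      using psi_deriv[OF u1 N] DERIV_pow[of N u UNIV]
      by (intro DERIV_diff DERIV_cmult DERIV_cdivide) auto
    moreover have "real N * (u ^ (N - 1) / (1 - u)) - real N * u ^ (N - 1) / (1 - v) \<ge> 0"
    proof -
      have "1 / (1 - v) \<le> 1 / (1 - u)" using u u1 v by (intro divide_left_mono) auto
      hence "real N * u ^ (N - 1) * (1 / (1 - v)) \<le> real N * u ^ (N - 1) * (1 / (1 - u))"
        using u v by (intro mult_left_mono) auto
      thus ?thesis by simp
    qed
    ultimately show "\<exists>y. (?f has_real_derivative y) (at u) \<and> 0 \<le> y" by blast
  qed
  moreover have "(w ^ N - v ^ N) / (1 - v) = w ^ N / (1 - v) - v ^ N / (1 - v)"
    by (simp add: diff_divide_distrib)
  ultimately show ?thesis by (simp add: right_diff_distrib)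
qed

lemma psi_upper:
  assumes N: "N \<ge> 1" and v: "0 \<le> v" "v \<le> w" "w < 1"
  shows "real N * (psi N w - psi N v) \<le> (w ^ N - v ^ N) / (1 - w)"
proof -
  let ?f = "\<lambda>u. real N * psi N u - u ^ N / (1 - w)"
  have "?f w \<le> ?f v"
  proof (rule DERIV_nonpos_imp_nonincreasing[OF v(2)])
    fix u assume u: "v \<le> u" "u \<le> w"
    hence u1: "u < 1" using v by simp
    have "(?f has_real_derivative real N * (u ^ (N - 1) / (1 - u)) - real N * u ^ (N - 1) / (1 - w)) (at u)"
      using psi_deriv[OF u1 N] DERIV_pow[of N u UNIV]
      by (intro DERIV_diff DERIV_cmult DERIV_cdivide) auto
    moreover have "real N * (u ^ (N - 1) / (1 - u)) - real N * u ^ (N - 1) / (1 - w) \<le> 0"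
    proof -
      have "1 / (1 - u) \<le> 1 / (1 - w)" using u u1 v by (intro divide_left_mono) auto
      hence "real N * u ^ (N - 1) * (1 / (1 - u)) \<le> real N * u ^ (N - 1) * (1 / (1 - w))"
        using u v by (intro mult_left_mono) auto
      thus ?thesis by simp
    qed
    ultimately show "\<exists>y. (?f has_real_derivative y) (at u) \<and> y \<le> 0" by blast
  qed
  moreover have "(w ^ N - v ^ N) / (1 - w) = w ^ N / (1 - w) - v ^ N / (1 - w)"
    by (simp add: diff_divide_distrib)
  ultimately show ?thesis by (simp add: right_diff_distrib)
qed

lemma pow_swap:
  fixes q a :: real
  assumes "0 \<le> q" "q \<le> a" "k \<le> m"
  shows "q ^ m * a ^ k \<le> a ^ m * q ^ k"
proof -
  have "q ^ m * a ^ k = (q ^ k * a ^ k) * q ^ (m - k)"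
    using assms(3) by (simp add: power_add[symmetric])
  also have "\<dots> \<le> (q ^ k * a ^ k) * a ^ (m - k)"
    using assms by (intro mult_left_mono power_mono) auto
  also have "\<dots> = a ^ m * q ^ k"
    using assms(3) by (simp add: power_add[symmetric] mult_ac)
  finally show ?thesis .
qed

lemma psi_ratio:
  assumes N: "N \<ge> 1" and q: "0 \<le> q" "q \<le> a" "a < 1"
  shows "psi N q * (\<Sum>k<N. a ^ k) \<le> psi N a * (\<Sum>k<N. q ^ k)"
proof -
  have "psi N q * a ^ k \<le> psi N a * q ^ k" if k: "k < N" for k
  proof -
    have s1: "(\<lambda>i. 1 / real (i + N) * q ^ (i + N) * a ^ k) sums (psi N q * a ^ k)"
      using q by (intro sums_mult2 psi_sums) auto
    have s2: "(\<lambda>i. 1 / real (i + N) * a ^ (i + N) * q ^ k) sums (psi N a * q ^ k)"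
      using q by (intro sums_mult2 psi_sums) auto
    show ?thesis
    proof (rule sums_le[OF _ s1 s2])
      fix i
      have "q ^ (i + N) * a ^ k \<le> a ^ (i + N) * q ^ k" using q k by (intro pow_swap) auto
      thus "1 / real (i + N) * q ^ (i + N) * a ^ k \<le> 1 / real (i + N) * a ^ (i + N) * q ^ k"
        by (simp add: mult.assoc divide_right_mono)
    qed
  qed
  hence "(\<Sum>k<N. psi N q * a ^ k) \<le> (\<Sum>k<N. psi N a * q ^ k)" by (intro sum_mono) auto
  thus ?thesis by (simp add: sum_distrib_left)
qed



lemma reserve_props:
  assumes "K \<ge> 1"
  shows "reserve_index K x p \<in> {1..K} \<and>
    (\<forall>k\<in>{1..K}. x k * (\<Sum>j=k..K. p j) \<le> x (reserve_index K x p) * (\<Sum>j=reserve_index K x p..K. p j))"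
proof -
  define f where "f k = x k * (\<Sum>j=k..K. p j)" for k
  define T where "T = {i \<in> {1..K}. \<forall>k\<in>{1..K}. x k * (\<Sum>j=k..K. p j) \<le> x i * (\<Sum>j=i..K. p j)}"
  have fin: "finite (f ` {1..K})" by simp
  have ne: "f ` {1..K} \<noteq> {}" using assms by auto
  obtain i0 where i0: "i0 \<in> {1..K}" "f i0 = Max (f ` {1..K})"
    using Max_in[OF fin ne] by auto
  have "i0 \<in> T" unfolding T_def using i0 fin by (auto simp: f_def[symmetric])
  hence "T \<noteq> {}" by auto
  moreover have "finite T" unfolding T_def by simp
  ultimately have "Max T \<in> T" by (rule Max_in[rotated])
  moreover have "reserve_index K x p = Max T" unfolding reserve_index_def T_def by simp
  ultimately show ?thesis unfolding T_def by simp
qed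

lemma xmono:
  assumes "valid_values r K x" "1 \<le> i" "i \<le> j" "j \<le> K"
  shows "x i \<le> x j"
  using assms(3,4)
proof (induction j)
  case 0 then show ?case using assms(2) by simp
next
  case (Suc j)
  show ?case
  proof (cases "i = Suc j")
    case True then show ?thesis by simp
  next
    case False
    hence "i \<le> j" using Suc by simp
    hence "x i \<le> x j" using Suc by simp
    moreover have "x j < x (Suc j)" using assms(1,2) Suc.prems \<open>i \<le> j\<close>
      unfolding valid_values_def by auto
    ultimately show ?thesis by simp
  qed
qed

lemma xpos:
  assumes "valid_values r K x" "i \<in> {1..K}"
  shows "x i > 0"
proof -
  have "x 1 \<le> x i" using xmono[OF assms(1)] assms(2) by auto
  moreover have "x 1 > 0" using assms(1) unfolding valid_values_def by simp
  ultimately show ?thesis by simp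
qed

lemma cum_split:
  fixes p :: "nat \<Rightarrow> real"
  assumes "valid_dist K p" "1 \<le> k" "k \<le> Suc K"
  shows "(\<Sum>j=k..K. p j) = 1 - (\<Sum>j\<in>{1..<k}. p j)"
proof -
  have "(\<Sum>j\<in>{1..<k}. p j) + (\<Sum>j\<in>{k..<Suc K}. p j) = (\<Sum>j\<in>{1..<Suc K}. p j)"
    using assms by (intro sum.atLeastLessThan_concat) auto
  moreover have "(\<Sum>j\<in>{1..<Suc K}. p j) = 1" using assms(1) unfolding valid_dist_def
    by (simp add: atLeastLessThanSuc_atLeastAtMost)
  ultimately show ?thesis by (simp add: atLeastLessThanSuc_atLeastAtMost)
qed

lemma cum_mono:
  fixes p :: "nat \<Rightarrow> real"
  assumes "valid_dist K p" "i \<le> j" "j \<le> Suc K"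
  shows "(\<Sum>l\<in>{1..<i}. p l) \<le> (\<Sum>l\<in>{1..<j}. p l)"
  using assms unfolding valid_dist_def
  by (intro sum_mono2) (auto intro: less_imp_le)

lemma cum_nonneg:
  fixes p :: "nat \<Rightarrow> real"
  assumes "valid_dist K p" "j \<le> Suc K"
  shows "0 \<le> (\<Sum>l\<in>{1..<j}. p l)"
  using assms unfolding valid_dist_def
  by (intro sum_nonneg) (auto intro: less_imp_le)

lemma cum_lt1:
  fixes p :: "nat \<Rightarrow> real"
  assumes "valid_dist K p" "j \<le> K" "K \<ge> 1"
  shows "(\<Sum>l\<in>{1..<j}. p l) < 1"
proof -
  have "(\<Sum>l\<in>{1..<j}. p l) \<le> (\<Sum>l\<in>{1..<K}. p l)" using cum_mono[OF assms(1)] assms by simp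
  also have "\<dots> = 1 - (\<Sum>l=K..K. p l)" using cum_split[OF assms(1), of K] assms by simp
  also have "\<dots> < 1" using assms unfolding valid_dist_def by auto
  finally show ?thesis .
qed

lemma cum_top:
  fixes p :: "nat \<Rightarrow> real"
  assumes "valid_dist K p"
  shows "(\<Sum>l\<in>{1..<Suc K}. p l) = 1"
  using assms unfolding valid_dist_def by (simp add: atLeastLessThanSuc_atLeastAtMost)

lemma zprob_cum:
  "zprob N p i = (\<Sum>l\<in>{1..<Suc i}. p l) ^ N - (\<Sum>l\<in>{1..<i}. p l) ^ N"
  unfolding zprob_def by (simp add: atLeastLessThanSuc_atLeastAtMost)



lemma ELR_upper:
  fixes r :: real and K N :: nat and x p :: "nat \<Rightarrow> real"
  assumes r: "r > 1" and N: "N \<ge> 1" and K: "K \<ge> 1"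
    and vd: "valid_dist K p" and vv: "valid_values r K x"
  shows "ELR N K x p \<le> real N * psi N (1 - 1/r) /
           ((\<Sum>k<N. (1 - 1/r) ^ k) + real N * psi N (1 - 1/r))"
proof -
  define C where "C k = (\<Sum>j\<in>{1..<k}. p j)" for k
  define t where "t = reserve_index K x p"
  define R where "R = x t * (1 - C t)"
  define q where "q = C t"
  define a where "a = 1 - 1/r"
  define z where "z i = zprob N p i" for i
  have z_eq: "z i = C (Suc i) ^ N - C i ^ N" for i unfolding z_def C_def by (rule zprob_cum)
  have t: "t \<in> {1..K}" using reserve_props[OF K] unfolding t_def by blast
  have Ssplit: "(\<Sum>j=k..K. p j) = 1 - C k" if "k \<in> {1..K}" for k
    unfolding C_def using cum_split[OF vd] that by simp
  have tmax: "x k * (1 - C k) \<le> R" if "k \<in> {1..K}" for k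
    using reserve_props[OF K] that t Ssplit unfolding R_def t_def by metis
  have Cmono: "C i \<le> C j" if "i \<le> j" "j \<le> Suc K" for i j
    unfolding C_def using cum_mono[OF vd] that by simp
  have Cnn: "0 \<le> C j" if "j \<le> Suc K" for j unfolding C_def using cum_nonneg[OF vd] that by simp
  have Clt: "C j < 1" if "j \<le> K" for j unfolding C_def using cum_lt1[OF vd] that K by simp
  have C1: "C 1 = 0" unfolding C_def by simp
  have Ctop: "C (Suc K) = 1" unfolding C_def using cum_top[OF vd] by simp
  have xt: "x t > 0" using xpos[OF vv t] .
  have q01: "0 \<le> q" "q < 1" unfolding q_def using Cnn Clt t by auto
  have R0: "R \<ge> 0" unfolding R_def q_def[symmetric] using xt q01 by simp
  have znn: "z i \<ge> 0" if "i \<le> K" for i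
  proof -
    have "C i ^ N \<le> C (Suc i) ^ N" using Cmono Cnn that by (intro power_mono) auto
    thus ?thesis unfolding z_eq by simp
  qed
  define L where "L = (\<Sum>i=1..<t. z i * x i)"
  define H where "H = (\<Sum>i=t..K. z i * x i)"
  have Lb: "L \<le> R * (real N * psi N q)"
  proof -
    have "z i * x i \<le> R * (real N * (psi N (C (Suc i)) - psi N (C i)))" if i: "i \<in> {1..<t}" for i
    proof -
      have iK: "i \<in> {1..K}" "Suc i \<le> K" using i t by auto
      have c: "0 \<le> C i" "C i \<le> C (Suc i)" "C (Suc i) < 1" "C i < 1"
        using Cnn Cmono Clt iK by auto
      have "x i * (1 - C i) \<le> R" using tmax iK by simp
      hence xi: "x i \<le> R / (1 - C i)" using c by (simp add: le_divide_eq)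
      have "z i * x i \<le> z i * (R / (1 - C i))"
        using znn iK xi by (intro mult_left_mono) auto
      also have "\<dots> = R * (z i / (1 - C i))" by simp
      also have "\<dots> \<le> R * (real N * (psi N (C (Suc i)) - psi N (C i)))"
        using R0 psi_lower[OF N c(1,2,3)] unfolding z_eq by (intro mult_left_mono) auto
      finally show ?thesis .
    qed
    hence "L \<le> (\<Sum>i=1..<t. R * (real N * (psi N (C (Suc i)) - psi N (C i))))"
      unfolding L_def by (intro sum_mono) auto
    also have "\<dots> = R * real N * (\<Sum>i=1..<t. psi N (C (Suc i)) - psi N (C i))"
      by (simp add: sum_distrib_left mult_ac)
    also have "\<dots> = R * real N * (psi N (C t) - psi N (C 1))"
      using t by (subst sum_Suc_diff') auto
    finally show ?thesis using C1 psi_zero unfolding q_def by (simp add: mult_ac)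
  qed
  have Hb: "x t * (1 - q ^ N) \<le> H"
  proof -
    have "(\<Sum>i=t..K. z i * x t) \<le> H" unfolding H_def
      using znn xmono[OF vv] t by (intro sum_mono mult_left_mono) auto
    moreover have "(\<Sum>i=t..K. z i * x t) = x t * (\<Sum>i=t..<Suc K. C (Suc i) ^ N - C i ^ N)"
      by (simp add: z_eq sum_distrib_left atLeastLessThanSuc_atLeastAtMost mult_ac)
    moreover have "(\<Sum>i=t..<Suc K. C (Suc i) ^ N - C i ^ N) = 1 - q ^ N"
      using t Ctop unfolding q_def by (subst sum_Suc_diff') auto
    ultimately show ?thesis by simp
  qed
  have split: "(\<Sum>i=1..K. z i * x i) = L + H"
  proof -
    have "(\<Sum>i=1..<t. z i * x i) + (\<Sum>i=t..<Suc K. z i * x i) = (\<Sum>i=1..<Suc K. z i * x i)"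
      using t by (intro sum.atLeastLessThan_concat) auto
    thus ?thesis unfolding L_def H_def by (simp add: atLeastLessThanSuc_atLeastAtMost)
  qed
  have ELR_eq: "ELR N K x p = L / (L + H)"
  proof -
    have "ELR N K x p = (\<Sum>i=1..<t. z i * x i) / (\<Sum>i=1..K. z i * x i)"
      unfolding ELR_def t_def z_def by simp
    thus ?thesis using split unfolding L_def by simp
  qed
  have qa: "q \<le> a"
  proof -
    have K1: "1 \<in> {1..K}" using K by simp
    have "x 1 \<le> R" using tmax[OF K1] C1 by simp
    moreover have "x K \<le> r * x 1" using vv unfolding valid_values_def by simp
    moreover have "x t \<le> x K" using xmono[OF vv] t by auto
    ultimately have "x t \<le> r * R" using r
      by (meson less_imp_le mult_left_mono order_trans less_le_trans zero_less_one)
    hence "x t * 1 \<le> x t * (r * (1 - q))" unfolding R_def q_def by (simp add: mult_ac)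
    hence "1 \<le> r * (1 - q)" using xt by (subst (asm) mult_le_cancel_left_pos) auto
    thus ?thesis unfolding a_def using r by (simp add: field_simps)
  qed
  have a01: "0 \<le> a" "a < 1" unfolding a_def using r by auto
  have psia: "0 \<le> real N * psi N a"
  proof -
    have "(a ^ N - 0 ^ N) / (1 - 0) \<le> real N * (psi N a - psi N 0)"
      using psi_lower[OF N order_refl a01(1) a01(2)] .
    moreover have "(0::real) ^ N = 0" using N by simp
    ultimately have "a ^ N \<le> real N * psi N a" using psi_zero by simp
    moreover have "0 \<le> a ^ N" using a01 by simp
    ultimately show ?thesis by linarith
  qed
  define Pa where "Pa = (\<Sum>k<N. a ^ k)"
  define Pq where "Pq = (\<Sum>k<N. q ^ k)"
  have Pa1: "Pa \<ge> 1"
  proof -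
    have "(\<Sum>k\<in>{0}. a ^ k) \<le> Pa" unfolding Pa_def using N a01 by (intro sum_mono2) auto
    thus ?thesis by simp
  qed
  have Hq: "1 - q ^ N = (1 - q) * Pq" unfolding Pq_def by (rule one_diff_power_eq)
  have Hpos: "H > 0"
  proof -
    have "q ^ N < 1" using q01 N by (simp add: power_less_one_iff)
    hence "0 < x t * (1 - q ^ N)" using xt by simp
    thus ?thesis using Hb by linarith
  qed
  have L0: "L \<ge> 0" unfolding L_def using znn xpos[OF vv] t
    by (intro sum_nonneg mult_nonneg_nonneg) (auto intro: less_imp_le)
  have key: "L * Pa \<le> real N * psi N a * H"
  proof -
    have "L * Pa \<le> R * (real N * psi N q) * Pa" using Lb Pa1 by (intro mult_right_mono) auto
    also have "\<dots> = x t * (1 - q) * real N * (psi N q * Pa)" unfolding R_def q_def by (simp add: mult_ac)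
    also have "\<dots> \<le> x t * (1 - q) * real N * (psi N a * Pq)"
      unfolding Pa_def Pq_def using psi_ratio[OF N q01(1) qa a01(2)] xt q01
      by (intro mult_left_mono) auto
    also have "\<dots> = real N * psi N a * (x t * (1 - q ^ N))" unfolding Hq by (simp add: mult_ac)
    also have "\<dots> \<le> real N * psi N a * H" using Hb psia by (intro mult_left_mono) auto
    finally show ?thesis .
  qed
  have "L / (L + H) \<le> real N * psi N a / (Pa + real N * psi N a)"
  proof -
    have p1: "L + H > 0" using L0 Hpos by simp
    have p2: "Pa + real N * psi N a > 0" using Pa1 psia by simp
    have "L * (Pa + real N * psi N a) \<le> real N * psi N a * (L + H)"
      using key by (simp add: algebra_simps)
    hence "L \<le> real N * psi N a * (L + H) / (Pa + real N * psi N a)"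
      using p2 by (subst pos_le_divide_eq) auto
    also have "\<dots> = real N * psi N a / (Pa + real N * psi N a) * (L + H)" by simp
    finally show ?thesis using p1 by (subst pos_divide_le_eq) auto
  qed
  thus ?thesis unfolding ELR_eq a_def Pa_def .
qed



lemma conv_pow:
  fixes u h :: real
  assumes "0 \<le> h" "h \<le> u"
  shows "u ^ N - (u - h) ^ N \<le> (u + h) ^ N - u ^ N"
proof (cases N)
  case 0 then show ?thesis by simp
next
  case (Suc n)
  have e1: "u ^ N - (u - h) ^ N = h * (\<Sum>k<Suc n. u ^ k * (u - h) ^ (n - k))"
    unfolding Suc diff_power_eq_sum by simp
  have e2: "(u + h) ^ N - u ^ N = h * (\<Sum>k<Suc n. (u + h) ^ k * u ^ (n - k))"
    unfolding Suc diff_power_eq_sum by simp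
  have "(\<Sum>k<Suc n. u ^ k * (u - h) ^ (n - k)) \<le> (\<Sum>k<Suc n. (u + h) ^ k * u ^ (n - k))"
    using assms by (intro sum_mono mult_mono power_mono) auto
  thus ?thesis unfolding e1 e2 using assms by (intro mult_left_mono) auto
qed

lemma lower_instance:
  fixes r :: real and K N :: nat
  assumes r: "r > 1" and N: "N \<ge> 1" and K: "K > 2"
  defines "a \<equiv> 1 - 1 / r"
  defines "\<delta> \<equiv> a / (real K - 1)"
  shows "\<exists>x p. valid_dist K p \<and> valid_values r K x \<and>
     real N * psi N (a - \<delta>) / ((\<Sum>k<N. a ^ k) + real N * psi N (a - \<delta>)) \<le> ELR N K x p"
proof -
  define p where "p j = (if j < K then \<delta> else 1 - a)" for j
  define x where "x j = 1 / (1 - real (j - 1) * \<delta>)" for j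
  define C where "C j = (\<Sum>l\<in>{1..<j}. p l)" for j
  have a01: "0 < a" "a < 1" unfolding a_def using r by auto
  have Kr: "real K - 1 > 1" using K by simp
  have d0: "\<delta> > 0" unfolding \<delta>_def using a01 Kr by simp
  have dK: "real (K - 1) * \<delta> = a" unfolding \<delta>_def using K by (simp add: of_nat_diff)
  have jd: "real j * \<delta> < 1" if "j \<le> K - 1" for j
  proof -
    have "real j * \<delta> \<le> real (K - 1) * \<delta>" using that d0 by (intro mult_right_mono) auto
    thus ?thesis using dK a01 by linarith
  qed
  have Cj: "C j = real (j - 1) * \<delta>" if "j \<le> K" for j
  proof -
    have "C j = (\<Sum>l\<in>{1..<j}. \<delta>)" unfolding C_def p_def using that by (intro sum.cong) auto
    thus ?thesis by simp
  qed
  have vd: "valid_dist K p"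
  proof -
    have "(\<Sum>i=1..K. p i) = (\<Sum>i=1..<Suc K. p i)" by (simp add: atLeastLessThanSuc_atLeastAtMost)
    also have "\<dots> = (\<Sum>i=1..<K. p i) + p K" using K by (subst sum.atLeastLessThan_Suc) auto
    also have "\<dots> = C K + (1 - a)" unfolding C_def p_def by simp
    also have "\<dots> = 1" using Cj[of K] dK by simp
    finally show ?thesis unfolding valid_dist_def p_def using d0 a01 by auto
  qed
  have xS: "x k * (\<Sum>j=k..K. p j) = 1" if "k \<in> {1..K}" for k
  proof -
    have "(\<Sum>j=k..K. p j) = 1 - C k" unfolding C_def using cum_split[OF vd] that by simp
    moreover have "C k < 1"
    proof -
      have "k - 1 \<le> K - 1" using that by auto
      thus ?thesis using Cj[of k] jd[of "k - 1"] that by auto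
    qed
    ultimately show ?thesis unfolding x_def using Cj[of k] that by simp
  qed
  have t: "reserve_index K x p = K"
  proof -
    have "{i \<in> {1..K}. \<forall>k\<in>{1..K}. x k * (\<Sum>j=k..K. p j) \<le> x i * (\<Sum>j=i..K. p j)} = {1..K}"
      using xS by auto
    moreover have "Max {1..K} = K" using K by (intro Max_eqI) auto
    ultimately show ?thesis unfolding reserve_index_def by simp
  qed
  have vv: "valid_values r K x"
  proof -
    have "x 1 = 1" unfolding x_def by simp
    moreover have "x i < x (Suc i)" if "i \<in> {1..<K}" for i
    proof -
      have h1: "real i * \<delta> < 1" using jd that by auto
      have h2: "real (i - 1) * \<delta> < real i * \<delta>" using that d0 by (intro mult_strict_right_mono) auto
      show ?thesis unfolding x_def using h1 h2
        by (intro divide_strict_left_mono) (auto intro: mult_pos_pos)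
    qed
    moreover have "x K = r" unfolding x_def using dK a01 unfolding a_def by simp
    ultimately show ?thesis unfolding valid_values_def using r by auto
  qed
  define z where "z i = zprob N p i" for i
  have z_eq: "z i = C (Suc i) ^ N - C i ^ N" for i unfolding z_def C_def by (rule zprob_cum)
  define L where "L = (\<Sum>i=1..<K. z i * x i)"
  define P where "P = (\<Sum>k<N. a ^ k)"
  define G where "G = real N * psi N (a - \<delta>)"
  have CSK: "C (Suc K) = 1" unfolding C_def using cum_top[OF vd] by simp
  have HK: "z K * x K = P"
  proof -
    have "z K = 1 - a ^ N" unfolding z_eq CSK using Cj[of K] dK by simp
    also have "\<dots> = (1 - a) * P" unfolding P_def by (rule one_diff_power_eq)
    finally show ?thesis unfolding x_def using dK a01 unfolding a_def by simp
  qed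
  have ELR_eq: "ELR N K x p = L / (L + P)"
  proof -
    have "(\<Sum>i=1..K. z i * x i) = (\<Sum>i=1..<Suc K. z i * x i)"
      by (simp add: atLeastLessThanSuc_atLeastAtMost)
    also have "\<dots> = L + P" unfolding L_def HK[symmetric] using K by (subst sum.atLeastLessThan_Suc) auto
    finally have "(\<Sum>i=1..K. z i * x i) = L + P" .
    thus ?thesis unfolding ELR_def t z_def L_def by simp
  qed
  have term_nn: "0 \<le> z i * x i" if "i \<in> {1..<K}" for i
  proof -
    have c: "C i = real (i - 1) * \<delta>" "C (Suc i) = real i * \<delta>" using Cj that by auto
    have "C i ^ N \<le> C (Suc i) ^ N" unfolding c using d0 by (intro power_mono mult_right_mono) auto
    moreover have "x i > 0" unfolding x_def using jd[of "i - 1"] that by auto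
    ultimately show ?thesis unfolding z_eq by simp
  qed
  have LG: "G \<le> L"
  proof -
    have "(\<Sum>i\<in>{2..<K}. z i * x i) \<le> L" unfolding L_def using term_nn
      by (intro sum_mono2) auto
    moreover have "(\<Sum>i\<in>{2..<K}. z i * x i) = (\<Sum>j\<in>{0..<K-2}. z (j + 2) * x (j + 2))"
    proof -
      have e: "{2..<K} = {0 + 2..<(K - 2) + 2}" using K by auto
      show ?thesis by (simp only: e sum.shift_bounds_nat_ivl)
    qed
    moreover have "real N * (psi N (real (Suc j) * \<delta>) - psi N (real j * \<delta>)) \<le> z (j + 2) * x (j + 2)"
      if j: "j \<in> {0..<K-2}" for j
    proof -
      have c: "C (j + 2) = real (Suc j) * \<delta>" "C (Suc (j + 2)) = real (j + 2) * \<delta>"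
        using Cj j by auto
      have xe: "x (j + 2) = 1 / (1 - real (Suc j) * \<delta>)" unfolding x_def by simp
      have lt: "real (Suc j) * \<delta> < 1" using jd[of "Suc j"] j by auto
      have "real N * (psi N (real (Suc j) * \<delta>) - psi N (real j * \<delta>))
          \<le> ((real (Suc j) * \<delta>) ^ N - (real j * \<delta>) ^ N) / (1 - real (Suc j) * \<delta>)"
        using d0 lt by (intro psi_upper N) auto
      also have "\<dots> \<le> ((real (j + 2) * \<delta>) ^ N - (real (Suc j) * \<delta>) ^ N) / (1 - real (Suc j) * \<delta>)"
      proof -
        have "(real (Suc j) * \<delta>) ^ N - (real (Suc j) * \<delta> - \<delta>) ^ N
            \<le> (real (Suc j) * \<delta> + \<delta>) ^ N - (real (Suc j) * \<delta>) ^ N"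
          using d0 by (intro conv_pow) auto
        moreover have e1: "real (Suc j) * \<delta> - \<delta> = real j * \<delta>" by (simp add: algebra_simps)
        moreover have e2: "real (Suc j) * \<delta> + \<delta> = real (j + 2) * \<delta>" by (simp add: algebra_simps)
        ultimately have "(real (Suc j) * \<delta>) ^ N - (real j * \<delta>) ^ N
            \<le> (real (j + 2) * \<delta>) ^ N - (real (Suc j) * \<delta>) ^ N" by simp
        thus ?thesis using lt by (intro divide_right_mono) auto
      qed
      also have "\<dots> = z (j + 2) * x (j + 2)" unfolding z_eq c xe by simp
      finally show ?thesis .
    qed
    hence "(\<Sum>j\<in>{0..<K-2}. real N * (psi N (real (Suc j) * \<delta>) - psi N (real j * \<delta>)))
        \<le> (\<Sum>j\<in>{0..<K-2}. z (j + 2) * x (j + 2))" by (intro sum_mono) auto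
    moreover have "(\<Sum>j\<in>{0..<K-2}. real N * (psi N (real (Suc j) * \<delta>) - psi N (real j * \<delta>)))
        = real N * (psi N (real (K - 2) * \<delta>) - psi N (real 0 * \<delta>))"
      by (subst sum_distrib_left[symmetric], subst sum_Suc_diff'[where f = "\<lambda>j. psi N (real j * \<delta>)"]) auto
    moreover have "real (K - 2) * \<delta> = a - \<delta>"
    proof -
      have "real (K - 2) = real (K - 1) - 1" using K by (simp add: of_nat_diff)
      thus ?thesis using dK by (simp add: algebra_simps)
    qed
    ultimately show ?thesis unfolding G_def using psi_zero by simp
  qed
  have P1: "P \<ge> 1"
  proof -
    have "(\<Sum>k\<in>{0}. a ^ k) \<le> P" unfolding P_def using N a01 by (intro sum_mono2) auto
    thus ?thesis by simp
  qed
  have G0: "G \<ge> 0"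
  proof -
    have ad: "0 \<le> a - \<delta>" "a - \<delta> < 1"
    proof -
      have "real (K - 2) * \<delta> \<ge> 0" using d0 by simp
      moreover have "real (K - 2) = real (K - 1) - 1" using K by (simp add: of_nat_diff)
      ultimately show "0 \<le> a - \<delta>" using dK by (simp add: algebra_simps)
      show "a - \<delta> < 1" using a01 d0 by simp
    qed
    have "((a - \<delta>) ^ N - 0 ^ N) / (1 - 0) \<le> real N * (psi N (a - \<delta>) - psi N 0)"
      using psi_lower[OF N order_refl ad] .
    moreover have "(0::real) ^ N = 0" using N by simp
    ultimately have "(a - \<delta>) ^ N \<le> G" unfolding G_def using psi_zero by simp
    moreover have "0 \<le> (a - \<delta>) ^ N" using ad by simp
    ultimately show ?thesis by linarith
  qed
  have "G / (P + G) \<le> L / (L + P)"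
  proof -
    have p1: "L + P > 0" using LG G0 P1 by simp
    have p2: "P + G > 0" using G0 P1 by simp
    have "G * (L + P) \<le> L * (P + G)" using LG P1
      by (simp add: algebra_simps mult_right_mono)
    hence "G \<le> L * (P + G) / (L + P)" using p1 by (subst pos_le_divide_eq) auto
    also have "\<dots> = L / (L + P) * (P + G)" by simp
    finally show ?thesis using p2 by (subst pos_divide_le_eq) auto
  qed
  thus ?thesis using vd vv ELR_eq unfolding G_def P_def by (intro exI[of _ x] exI[of _ p]) auto
qed



theorem proposition8:
  fixes r :: real and K N :: nat
  assumes "r > 1" and "N \<ge> 1" and "K > 2"
  shows "gamma1 r K N / ((r ^ N - (r - 1) ^ N) / r ^ (N - 1) + gamma1 r K N) \<le> eta r K N
       \<and> eta r K N \<le> gamma2 r K N / ((r ^ N - (r - 1) ^ N) / r ^ (N - 1) + gamma2 r K N)"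
proof -
  note r = assms(1) and N = assms(2) and K = assms(3)
  define a where "a = 1 - 1 / r"
  define \<delta> where "\<delta> = a / (real K - 1)"
  define P where "P = (\<Sum>k<N. a ^ k)"
  have a01: "0 < a" "a < 1" unfolding a_def using r by auto
  have Kr: "real K - 1 > 1" using K by simp
  have ab: "a * (1 - 1 / (real K - 1)) = a - \<delta>" unfolding \<delta>_def by (simp add: algebra_simps)
  have ad: "0 \<le> a - \<delta>" "a - \<delta> < 1"
  proof -
    have "\<delta> \<le> a" unfolding \<delta>_def using a01 Kr by (simp add: divide_le_eq)
    thus "0 \<le> a - \<delta>" by simp
    have "\<delta> > 0" unfolding \<delta>_def using a01 Kr by simp
    thus "a - \<delta> < 1" using a01 by simp
  qed
  have g2: "gamma2 r K N = real N * psi N a"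
  proof -
    have "(\<lambda>i. 1 / real (i + N) * a ^ (i + N)) sums psi N a" using a01 by (intro psi_sums) auto
    thus ?thesis unfolding gamma2_def a_def by (simp add: sums_iff)
  qed
  have g1: "gamma1 r K N = real N * psi N (a - \<delta>)"
  proof -
    have "(\<lambda>i. 1 / real (i + N) * (a - \<delta>) ^ (i + N)) sums psi N (a - \<delta>)" using ad by (intro psi_sums) auto
    hence "(\<lambda>i. 1 / real (i + N) * (a * (1 - 1 / (real K - 1))) ^ (i + N)) sums psi N (a - \<delta>)"
      by (simp only: ab)
    hence "(\<lambda>i. 1 / real (i + N) * a ^ (i + N) * (1 - 1 / (real K - 1)) ^ (i + N)) sums psi N (a - \<delta>)"
      by (simp only: power_mult_distrib mult.assoc)
    hence "(\<lambda>i. 1 / real (i + N) * (1 - 1 / r) ^ (i + N) * (1 - 1 / (real K - 1)) ^ (i + N)) sums psi N (a - \<delta>)"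
      by (simp only: a_def)
    thus ?thesis unfolding gamma1_def by (simp add: sums_iff)
  qed
  have den: "(r ^ N - (r - 1) ^ N) / r ^ (N - 1) = P"
  proof -
    obtain n where n: "N = Suc n" using N by (cases N) auto
    have "r - 1 = r * a" unfolding a_def using r by (simp add: field_simps)
    hence "(r - 1) ^ N = r ^ N * a ^ N" by (simp only: power_mult_distrib)
    hence "r ^ N - (r - 1) ^ N = r ^ N * (1 - a ^ N)" by (simp add: algebra_simps)
    also have "\<dots> = r ^ N * ((1 - a) * P)" unfolding P_def by (simp add: one_diff_power_eq)
    also have "\<dots> = r ^ (N - 1) * P" unfolding a_def n using r by simp
    finally show ?thesis using r by simp
  qed
  define S where "S = {ELR N K x p | x p. valid_dist K p \<and> valid_values r K x}"
  have etaS: "eta r K N = Sup S" unfolding eta_def S_def ..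
  define U where "U = real N * psi N a / (P + real N * psi N a)"
  have ub: "e \<le> U" if "e \<in> S" for e
    using that ELR_upper[OF r N] K unfolding S_def U_def P_def a_def by auto
  obtain x p where xp: "valid_dist K p" "valid_values r K x"
      "real N * psi N (a - \<delta>) / (P + real N * psi N (a - \<delta>)) \<le> ELR N K x p"
    using lower_instance[OF r N K] unfolding a_def \<delta>_def P_def by blast
  have inS: "ELR N K x p \<in> S" unfolding S_def using xp by blast
  have ne: "S \<noteq> {}" using inS by blast
  have bdd: "bdd_above S" using ub by (intro bdd_aboveI) auto
  have "ELR N K x p \<le> Sup S" using inS bdd by (rule cSup_upper)
  moreover have "Sup S \<le> U" using ne ub by (rule cSup_least)
  ultimately show ?thesis unfolding etaS g1 g2 den U_def using xp(3) by simp
qed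


end
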